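(* Let $n\ge 2$ and let $W$ be a channel from $\{1,2\}$ to $\{1,\dots,n\}$. Then $C_{01}(\lambda)=C_{11}(\lambda)$ for every $\lambda\in\Lambda(W)$; consequently $\underline{C}_{01}(W)=1-\overline{P}_W(1)$ and $\overline{C}_{01}(W)=1-\underline{P}_W(1)$.
   Context: A channel is a row-stochastic matrix. With $\mathcal{X}=\{1,\dots,m\}$ (here $m=2$) and $\mathcal{Y}=\{1,\dots,n\}$, a deterministic channel is a 0-1 channel (a map $D:\mathcal{X}\to\mathcal{Y}$); $\mathcal{D}$ is the set of them and $\mathrm{rank}(D)$ the matrix rank. $\Lambda(W)=\{\lambda\text{ probability distribution on }\mathcal{D}: W=\sum_D\lambda_DD\}$. $I(\mu,K)=\sum_x\mu_x D(K_{x,*}\|\mu K)$ (KL divergence, base 2). $C_{11}(\lambda)=\sum_D\lambda_D\log_2\mathrm{rank}(D)$, $C_{01}(\lambda)=\max_\mu\sum_D\lambda_DI(\mu,D)$ over distributions $\mu$ on $\mathcal{X}$. $\underline{C}_{01}(W)=\inf_{\lambda\in\Lambda(W)}C_{01}(\lambda)$, $\overline{C}_{01}(W)=\sup_{\lambda\in\Lambda(W)}C_{01}(\lambda)$. $P_\lambda(r)=\lambda(\{D:\mathrm{rank}(D)=r\})$, $\underline{P}_W(r)=\min_{\lambda\in\Lambda(W)}P_\lambda(r)$, $\overline{P}_W(r)=\max_{\lambda\in\Lambda(W)}P_\lambda(r)$. *)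

theory Defs
  imports "HOL-Analysis.Analysis" "HOL-Library.Numeral_Type"
begin

text \<open>Input alphabet X = the two-element type 2, output alphabet Y = a finite type 'n
  with CARD('n) = n. A channel is a row-stochastic matrix real^'n^2 (row x, column y).\<close>

definition channel :: "real^'n::finite^'m::finite \<Rightarrow> bool" where
  "channel W \<longleftrightarrow> (\<forall>x y. 0 \<le> W$x$y) \<and> (\<forall>x. (\<Sum>y\<in>UNIV. W$x$y) = 1)"

definition detmat :: "('m::finite \<Rightarrow> 'n::finite) \<Rightarrow> real^'n^'m" where
  "detmat D = (\<chi> x y. if D x = y then 1 else 0)"

definition prob_dist :: "('a::finite \<Rightarrow> real) \<Rightarrow> bool" where
  "prob_dist p \<longleftrightarrow> (\<forall>a. 0 \<le> p a) \<and> (\<Sum>a\<in>UNIV. p a) = 1"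

definition Lambda :: "real^'n::finite^'m::finite \<Rightarrow> (('m \<Rightarrow> 'n) \<Rightarrow> real) set" where
  "Lambda W = {lam. prob_dist lam \<and> W = (\<Sum>D\<in>UNIV. lam D *\<^sub>R detmat D)}"

text \<open>KL divergence in bits, with the convention 0 log(0/q) = 0.\<close>
definition KL :: "('n::finite \<Rightarrow> real) \<Rightarrow> ('n \<Rightarrow> real) \<Rightarrow> real" where
  "KL p q = (\<Sum>y | 0 < p y. p y * log 2 (p y / q y))"

definition mutual_info :: "('m::finite \<Rightarrow> real) \<Rightarrow> real^'n::finite^'m \<Rightarrow> real" where
  "mutual_info \<mu> K = (\<Sum>x\<in>UNIV. \<mu> x * KL (\<lambda>y. K$x$y) (\<lambda>y. \<Sum>x'\<in>UNIV. \<mu> x' * K$x'$y))"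

definition C11 :: "(('m::finite \<Rightarrow> 'n::finite) \<Rightarrow> real) \<Rightarrow> real" where
  "C11 lam = (\<Sum>D\<in>UNIV. lam D * log 2 (real (rank (detmat D))))"

text \<open>The maximum over input distributions (attained by compactness) written as a supremum.\<close>
definition C01 :: "(('m::finite \<Rightarrow> 'n::finite) \<Rightarrow> real) \<Rightarrow> real" where
  "C01 lam = (SUP \<mu>\<in>{\<mu>. prob_dist \<mu>}. \<Sum>D\<in>UNIV. lam D * mutual_info \<mu> (detmat D))"

definition C01_lower :: "real^'n::finite^'m::finite \<Rightarrow> real" where
  "C01_lower W = (INF lam\<in>Lambda W. C01 lam)"

definition C01_upper :: "real^'n::finite^'m::finite \<Rightarrow> real" where
  "C01_upper W = (SUP lam\<in>Lambda W. C01 lam)"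

definition P_rank :: "(('m::finite \<Rightarrow> 'n::finite) \<Rightarrow> real) \<Rightarrow> nat \<Rightarrow> real" where
  "P_rank lam r = (\<Sum>D | rank (detmat D) = r. lam D)"

text \<open>min / max over Lambda(W) (attained by compactness) written as Inf / Sup.\<close>
definition P_lower :: "real^'n::finite^'m::finite \<Rightarrow> nat \<Rightarrow> real" where
  "P_lower W r = (INF lam\<in>Lambda W. P_rank lam r)"

definition P_upper :: "real^'n::finite^'m::finite \<Rightarrow> nat \<Rightarrow> real" where
  "P_upper W r = (SUP lam\<in>Lambda W. P_rank lam r)"

end

theory Submission imports Defs begin
lemma row_detmat: "row i (detmat D) = axis (D i) 1"
  unfolding row_def detmat_def axis_def by (auto simp: vec_eq_iff)
lemma rows_detmat: "rows (detmat D) = (\<lambda>x. axis (D x) 1) ` (UNIV::2 set)"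
  unfolding rows_def row_detmat by auto
lemma rank_detmat: fixes D :: "2 \<Rightarrow> 'n::finite"
  shows "rank (detmat D) = (if D 1 = D 2 then 1 else 2)"
proof -
  have R: "rows (detmat D) = {axis (D 1) 1, axis (D 2) 1}"
    unfolding rows_detmat UNIV_2 by simp
  show ?thesis
  proof (cases "D 1 = D 2")
    case True
    then show ?thesis unfolding row_rank_def R by (simp add: dim_insert)
  next
    case False
    have ind: "independent {axis (D 1) 1, axis (D 2) (1::real)}"
      by (rule independent_substdbasis) (auto simp: Basis_vec_def)
    have "card {axis (D 1) 1, axis (D 2) (1::real)} = 2" using False by (simp add: axis_eq_axis)
    then show ?thesis unfolding row_rank_def R using False ind by (simp add: dim_eq_card_independent)
  qed
qed

lemma KL_detmat: "KL (\<lambda>y. detmat D $ x $ y) q = log 2 (1 / q (D x))"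
proof -
  have "{y. 0 < detmat D $ x $ y} = {D x}" by (auto simp: detmat_def)
  then show ?thesis unfolding KL_def by (simp add: detmat_def)
qed

lemma mi_detmat:
  fixes D :: "2 \<Rightarrow> 'n::finite"
  assumes "prob_dist \<mu>"
  shows "mutual_info \<mu> (detmat D) = (if D 1 = D 2 then 0 else (\<Sum>x\<in>UNIV. \<mu> x * log 2 (1 / \<mu> x)))"
proof -
  have s: "\<mu> 1 + \<mu> 2 = 1" using assms unfolding prob_dist_def sum_2 by simp
  have q: "(\<Sum>x'\<in>UNIV. \<mu> x' * detmat D $ x' $ D x) = (if D 1 = D 2 then 1 else \<mu> x)" for x
    using s exhaust_2[of x] by (auto simp: sum_2 detmat_def)
  show ?thesis unfolding mutual_info_def KL_detmat q by (auto simp: sum_2)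
qed

lemma ent_term: assumes "0 \<le> p" shows "p * log 2 (1 / p) \<le> p + (1/2 - p) / ln 2"
proof (cases "p = 0")
  case True then show ?thesis by simp
next
  case False
  then have p: "0 < p" using assms by simp
  have "ln (1 / (2*p)) \<le> 1 / (2*p) - 1" using p by (intro ln_le_minus_one) simp
  then have "p * ln (1 / (2*p)) \<le> p * (1 / (2*p) - 1)" using p by (simp add: mult_left_mono)
  also have "\<dots> = 1/2 - p" using p by (simp add: field_simps)
  finally have A: "p * ln (1 / (2*p)) \<le> 1/2 - p" .
  have "p * log 2 (1 / p) = p + p * ln (1/(2*p)) / ln 2"
    using p by (simp add: log_def ln_div ln_mult field_simps)
  then show ?thesis using A by (simp add: divide_right_mono)
qed

lemma ent_le1: assumes "prob_dist \<mu>" shows "(\<Sum>x\<in>(UNIV::2 set). \<mu> x * log 2 (1 / \<mu> x)) \<le> 1"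
proof -
  have s: "\<mu> 1 + \<mu> 2 = 1" and nn: "\<And>x. 0 \<le> \<mu> x" using assms unfolding prob_dist_def sum_2 by auto
  have "(\<Sum>x\<in>(UNIV::2 set). \<mu> x * log 2 (1 / \<mu> x)) \<le> (\<mu> 1 + (1/2 - \<mu> 1) / ln 2) + (\<mu> 2 + (1/2 - \<mu> 2) / ln 2)"
    unfolding sum_2 using ent_term[OF nn] by (intro add_mono) auto
  also have "\<dots> = (\<mu> 1 + \<mu> 2) + ((1/2 - \<mu> 1) + (1/2 - \<mu> 2)) / ln 2" by (simp add: add_divide_distrib[symmetric])
  also have "\<dots> = 1" using s by simp
  finally show ?thesis .
qed

lemma ent_unif: "(\<Sum>x\<in>(UNIV::2 set). (\<lambda>_. 1/2::real) x * log 2 (1 / (\<lambda>_. 1/2) x)) = 1"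
  by (simp add: sum_2)

lemma unif_pd: "prob_dist (\<lambda>_::2. 1/2::real)" unfolding prob_dist_def by (simp add: sum_2)
definition pairf :: "'n \<Rightarrow> 'n \<Rightarrow> (2 \<Rightarrow> 'n)" where
  "pairf a b = (\<lambda>x. if x = 1 then a else b)"

lemma sum_fun2:
  fixes F :: "(2 \<Rightarrow> 'n::finite) \<Rightarrow> real"
  shows "(\<Sum>D\<in>UNIV. F D) = (\<Sum>a\<in>UNIV. \<Sum>b\<in>UNIV. F (pairf a b))"
proof -
  have bij: "bij_betw (\<lambda>(a,b). pairf a b) (UNIV \<times> UNIV) (UNIV :: (2 \<Rightarrow> 'n) set)"
    apply (rule bij_betwI[where g = "\<lambda>D. (D 1, D 2)"])
    apply (auto simp: pairf_def fun_eq_iff)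
    using exhaust_2 by metis
  have "(\<Sum>D\<in>UNIV. F D) = (\<Sum>p\<in>UNIV \<times> UNIV. F ((\<lambda>(a,b). pairf a b) p))"
    using sum.reindex_bij_betw[OF bij, of F] by simp
  also have "\<dots> = (\<Sum>a\<in>UNIV. \<Sum>b\<in>UNIV. F (pairf a b))"
    by (simp add: sum.cartesian_product split_def)
  finally show ?thesis .
qed

lemma pairf_simps [simp]: "pairf a b 1 = a" "pairf a b 2 = b" by (auto simp: pairf_def)

lemma Lambda_nonempty:
  fixes W :: "real^'n::finite^2"
  assumes "channel W"
  shows "(\<lambda>D::2\<Rightarrow>'n. W$1$(D 1) * W$2$(D 2)) \<in> Lambda W"
proof -
  have nn: "\<And>x y. 0 \<le> W$x$y" and rs: "\<And>x. (\<Sum>y\<in>UNIV. W$x$y) = 1" using assms by (auto simp: channel_def)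
  have pd: "prob_dist (\<lambda>D::2\<Rightarrow>'n. W$1$(D 1) * W$2$(D 2))"
    unfolding prob_dist_def sum_fun2
  proof (intro conjI allI)
    show "(\<Sum>a\<in>UNIV. \<Sum>b\<in>UNIV. W $ 1 $ pairf a b 1 * W $ 2 $ pairf a b 2) = 1"
      by (simp add: sum_distrib_left[symmetric] sum_distrib_right[symmetric] rs)
  qed (simp add: nn)
  have "W $ x $ y = (\<Sum>D::2\<Rightarrow>'n\<in>UNIV. W$1$(D 1) * W$2$(D 2) * detmat D $ x $ y)" for x y
  proof (cases "x = 1")
    case True
    have "(\<Sum>D::2\<Rightarrow>'n\<in>UNIV. W$1$(D 1) * W$2$(D 2) * detmat D $ x $ y)
        = (\<Sum>a\<in>UNIV. (if a = y then W$1$a else 0) * (\<Sum>b\<in>UNIV. W$2$b))"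
      unfolding sum_fun2 using True by (auto simp: detmat_def sum_distrib_left intro!: sum.cong)
    also have "\<dots> = W $ x $ y" using True by (simp add: rs)
    finally show ?thesis ..
  next
    case False
    then have x2: "x = 2" using exhaust_2 by blast
    have "(\<Sum>D::2\<Rightarrow>'n\<in>UNIV. W$1$(D 1) * W$2$(D 2) * detmat D $ x $ y)
        = (\<Sum>a\<in>UNIV. \<Sum>b\<in>UNIV. W$1$a * (if b = y then W$2$b else 0))"
      unfolding sum_fun2 using x2 by (auto simp: detmat_def intro!: sum.cong)
    also have "\<dots> = (\<Sum>a\<in>UNIV. W$1$a * W$2$y)" by (simp add: sum_distrib_left[symmetric])
    also have "\<dots> = W $ x $ y" using x2 by (simp add: sum_distrib_right[symmetric] rs)
    finally show ?thesis ..
  qed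
  moreover have "(\<Sum>D::2\<Rightarrow>'n\<in>UNIV. (W$1$(D 1) * W$2$(D 2)) *\<^sub>R detmat D) $ x $ y
      = (\<Sum>D::2\<Rightarrow>'n\<in>UNIV. W$1$(D 1) * W$2$(D 2) * detmat D $ x $ y)" for x y
    by (simp only: sum_component vector_scaleR_component real_scaleR_def)
  ultimately have "W = (\<Sum>D::2\<Rightarrow>'n\<in>UNIV. (W$1$(D 1) * W$2$(D 2)) *\<^sub>R detmat D)"
    unfolding vec_eq_iff by metis
  then show ?thesis using pd unfolding Lambda_def by simp
qed

definition cval :: "((2 \<Rightarrow> 'n::finite) \<Rightarrow> real) \<Rightarrow> real" where
  "cval lam = (\<Sum>D\<in>UNIV. lam D * (if D 1 = D 2 then 0 else 1))"

lemma C11_eq: "C11 (lam :: (2 \<Rightarrow> 'n::finite) \<Rightarrow> real) = cval lam"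
  unfolding C11_def cval_def rank_detmat by (intro sum.cong) auto

lemma P1_eq:
  fixes lam :: "(2 \<Rightarrow> 'n::finite) \<Rightarrow> real"
  assumes "prob_dist lam"
  shows "P_rank lam 1 = 1 - cval lam"
proof -
  have "P_rank lam 1 = (\<Sum>D\<in>UNIV. lam D * (if D 1 = D 2 then 1 else 0))"
    unfolding P_rank_def rank_detmat
    by (simp add: sum.inter_filter[symmetric] if_distrib cong: if_cong)
  moreover have "(\<Sum>D\<in>UNIV. lam D * (if D 1 = D 2 then 1 else 0)) + cval lam = 1"
  proof -
    have h: "\<And>D::2\<Rightarrow>'n. (if D 1 = D 2 then 1 else 0) + (if D 1 = D 2 then 0 else (1::real)) = 1" by auto
    show ?thesis
      using assms unfolding cval_def prob_dist_def sum.distrib[symmetric]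
      by (simp add: distrib_left[symmetric] h del: distrib_left)
  qed
  ultimately show ?thesis by simp
qed

lemma cval_nn: assumes "prob_dist lam" shows "0 \<le> cval lam"
  using assms unfolding cval_def prob_dist_def by (intro sum_nonneg) auto

lemma C01_eq:
  fixes lam :: "(2 \<Rightarrow> 'n::finite) \<Rightarrow> real"
  assumes "prob_dist lam"
  shows "C01 lam = cval lam"
proof -
  define H where "H \<mu> = (\<Sum>x\<in>(UNIV::2 set). \<mu> x * log 2 (1 / \<mu> x))" for \<mu> :: "2 \<Rightarrow> real"
  have E: "(\<Sum>D\<in>UNIV. lam D * mutual_info \<mu> (detmat D)) = cval lam * H \<mu>" if "prob_dist \<mu>" for \<mu>
    unfolding mi_detmat[OF that] cval_def H_def sum_distrib_right by (intro sum.cong) auto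
  have c0: "0 \<le> cval lam" by (rule cval_nn[OF assms])
  have ub: "cval lam * H \<mu> \<le> cval lam" if "prob_dist \<mu>" for \<mu>
    using mult_left_mono[OF ent_le1[OF that, folded H_def] c0] by simp
  have "C01 lam = (SUP \<mu>\<in>{\<mu>. prob_dist \<mu>}. cval lam * H \<mu>)"
    unfolding C01_def by (intro SUP_cong) (auto simp: E)
  also have "\<dots> = cval lam"
  proof (rule antisym)
    show "(SUP \<mu>\<in>{\<mu>. prob_dist \<mu>}. cval lam * H \<mu>) \<le> cval lam"
      using unif_pd by (intro cSUP_least) (auto intro: ub)
    have "cval lam = cval lam * H (\<lambda>_. 1/2)" using ent_unif unfolding H_def by simp
    also have "\<dots> \<le> (SUP \<mu>\<in>{\<mu>. prob_dist \<mu>}. cval lam * H \<mu>)"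
      by (rule cSUP_upper) (auto intro!: unif_pd bdd_aboveI2[where M = "cval lam"] ub)
    finally show "cval lam \<le> (SUP \<mu>\<in>{\<mu>. prob_dist \<mu>}. cval lam * H \<mu>)" .
  qed
  finally show ?thesis .
qed

lemma cval_le1: assumes "prob_dist lam" shows "cval lam \<le> 1"
proof -
  have "cval lam \<le> (\<Sum>D\<in>UNIV. lam D)" unfolding cval_def
    using assms unfolding prob_dist_def by (intro sum_mono) auto
  then show ?thesis using assms unfolding prob_dist_def by simp
qed

lemma P_bounds: assumes "prob_dist (lam :: (2 \<Rightarrow> 'n::finite) \<Rightarrow> real)"
  shows "0 \<le> P_rank lam 1" "P_rank lam 1 \<le> 1"
  using P1_eq[OF assms] cval_nn[OF assms] cval_le1[OF assms] by auto

theorem proposition1: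
  fixes W :: "real^'n::finite^2"
  assumes "CARD('n) \<ge> 2"
    and "channel W"
  shows "(\<forall>lam\<in>Lambda W. C01 lam = C11 lam)
         \<and> C01_lower W = 1 - P_upper W 1
         \<and> C01_upper W = 1 - P_lower W 1"
proof -
  have pd: "prob_dist lam" if "lam \<in> Lambda W" for lam using that unfolding Lambda_def by auto
  have ne: "Lambda W \<noteq> {}" using Lambda_nonempty[OF assms(2)] by blast
  have C: "C01 lam = 1 - P_rank lam 1" if "lam \<in> Lambda W" for lam
    using C01_eq[OF pd[OF that]] P1_eq[OF pd[OF that]] by simp
  have b0: "0 \<le> P_rank lam 1" and b1: "P_rank lam 1 \<le> 1" if "lam \<in> Lambda W" for lam
    using P_bounds[OF pd[OF that]] by auto
  have bddP: "bdd_above (((\<lambda>lam. P_rank lam 1)) ` Lambda W)" "bdd_below (((\<lambda>lam. P_rank lam 1)) ` Lambda W)"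
    using b0 b1 by (auto intro!: bdd_aboveI2 bdd_belowI2)
  have bddC: "bdd_above (C01 ` Lambda W)" "bdd_below (C01 ` Lambda W)"
    using b0 b1 C by (auto intro!: bdd_aboveI2[where M = 1] bdd_belowI2[where m = 0])
  have 1: "\<forall>lam\<in>Lambda W. C01 lam = C11 lam"
  proof
    fix lam assume l: "lam \<in> Lambda W"
    show "C01 lam = C11 lam" using C01_eq[OF pd[OF l]] C11_eq[of lam] by simp
  qed
  have 2: "C01_lower W = 1 - P_upper W 1"
    unfolding C01_lower_def P_upper_def
  proof (rule antisym)
    have "(SUP lam\<in>Lambda W. P_rank lam 1) \<le> 1 - (INF lam\<in>Lambda W. C01 lam)"
    proof (rule cSUP_least[OF ne])
      fix lam assume l: "lam \<in> Lambda W"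
      have "(INF lam\<in>Lambda W. C01 lam) \<le> C01 lam" by (rule cINF_lower[OF bddC(2) l])
      then show "P_rank lam 1 \<le> 1 - (INF lam\<in>Lambda W. C01 lam)" using C[OF l] by simp
    qed
    then show "(INF lam\<in>Lambda W. C01 lam) \<le> 1 - (SUP lam\<in>Lambda W. P_rank lam 1)" by simp
    show "1 - (SUP lam\<in>Lambda W. P_rank lam 1) \<le> (INF lam\<in>Lambda W. C01 lam)"
    proof (rule cINF_greatest[OF ne])
      fix lam assume l: "lam \<in> Lambda W"
      have "P_rank lam 1 \<le> (SUP lam\<in>Lambda W. P_rank lam 1)" by (rule cSUP_upper[OF l bddP(1)])
      then show "1 - (SUP lam\<in>Lambda W. P_rank lam 1) \<le> C01 lam" using C[OF l] by simp
    qed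
  qed
  have 3: "C01_upper W = 1 - P_lower W 1"
    unfolding C01_upper_def P_lower_def
  proof (rule antisym)
    show "(SUP lam\<in>Lambda W. C01 lam) \<le> 1 - (INF lam\<in>Lambda W. P_rank lam 1)"
    proof (rule cSUP_least[OF ne])
      fix lam assume l: "lam \<in> Lambda W"
      have "(INF lam\<in>Lambda W. P_rank lam 1) \<le> P_rank lam 1" by (rule cINF_lower[OF bddP(2) l])
      then show "C01 lam \<le> 1 - (INF lam\<in>Lambda W. P_rank lam 1)" using C[OF l] by simp
    qed
    have "(INF lam\<in>Lambda W. P_rank lam 1) \<ge> 1 - (SUP lam\<in>Lambda W. C01 lam)"
    proof (rule cINF_greatest[OF ne])
      fix lam assume l: "lam \<in> Lambda W"
      have "C01 lam \<le> (SUP lam\<in>Lambda W. C01 lam)" by (rule cSUP_upper[OF l bddC(1)])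
      then show "1 - (SUP lam\<in>Lambda W. C01 lam) \<le> P_rank lam 1" using C[OF l] by simp
    qed
    then show "1 - (INF lam\<in>Lambda W. P_rank lam 1) \<le> (SUP lam\<in>Lambda W. C01 lam)" by simp
  qed
  show ?thesis using 1 2 3 by blast
qed

end
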